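(* Let $(\vec U,\le,{}^*,\vee,\wedge)$ be a universe of separations containing a finite separation system $(\vec S,\le,{}^* )$ (with the induced order and involution). Let $\mathcal F\subseteq 2^{\vec S}$ be a standard set of stars, and suppose $\vec S$ is $\mathcal F$-separable. Then exactly one of the following holds: (i) there exists an $S$-tree over $\mathcal F$; (ii) there exists an $\mathcal F$-tangle of $S$.
   Context: A separation system $(\vec S,\le,{}^* )$ is a partially ordered set with an order-reversing involution ${}^*$ ($\vec r\le\vec s\iff\vec r^{\,*}\ge\vec s^{\,*}$); write $\overleftarrow s:=\vec s^{\,*}$, a separation is $s=\{\vec s,\overleftarrow s\}$, $S$ is the set of separations, $s$ is degenerate if $\vec s=\overleftarrow s$, and $\vec r$ is trivial in $\vec S$ if there is $s\in S$ with $\vec r<\vec s$ and $\vec r<\overleftarrow s$. A star is a nonempty $\sigma\subseteq\vec S$ with $\vec r\le\overleftarrow s$ for all distinct $\vec r,\vec s\in\sigma$. A universe of separations is a separation system in which any two elements have a supremum $\vee$ and infimum $\wedge$. An orientation of $S$ contains exactly one of $\vec s,\overleftarrow s$ for each $s\in S$; a set $O\subseteq\vec S$ is consistent if there are no distinct $r,s\in S$ with orientations $\vec r<\vec s$ such that $\overleftarrow r,\vec s\in O$; $O$ avoids $\mathcal F$ if no subset of $O$ is in $\mathcal F$; an $\mathcal F$-tangle of $S$ is a consistent orientation of $S$ avoiding $\mathcal F$. $\mathcal F$ forces $\vec r$ if $\{\overleftarrow r\}\in\mathcal F$ or $r$ is degenerate; $\mathcal F$ is standard if it forces every trivial element of $\vec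 S$ (so every element not forced by a standard $\mathcal F$ is nontrivial and nondegenerate). An $S$-tree is a pair $(T,\alpha)$, $T$ a finite tree with at least one edge, $\alpha:\vec E(T)\to\vec S$ with $\alpha(y,x)=\alpha(x,y)^*$; it is over $\mathcal F$ if $\alpha(\{(y,t):yt\in E(T)\})\in\mathcal F$ for every node $t$. For nontrivial nondegenerate $\vec r\in\vec S$, $\vec S_{\ge\vec r}$ is the set of all orientations of those $s\in S$ having an orientation $\ge\vec r$; for $\vec s_0\ge\vec r$ the shifting map $f^{\vec r}_{\vec s_0}:\vec S_{\ge\vec r}\to\vec U$ is given by $f(\vec s)=\vec s\vee\vec s_0$, $f(\overleftarrow s)=(\vec s\vee\vec s_0)^*$ for all $\vec s\in\vec S_{\ge\vec r}\setminus\{\overleftarrow r\}$ with $\vec s\ge\vec r$. $\vec s_0\in\vec S$ is linked to $\vec r$ if $\vec s_0\ge\vec r$ and $\vec s\vee\vec s_0\in\vec S$ for all $\vec s\in\vec S$ with $\vec s\ge\vec r$, $\vec s\neq\overleftarrow r$; it is $\mathcal F$-linked to $\vec r$ if moreover $f^{\vec r}_{\vec s_0}(\sigma)\in\mathcal F$ for every star $\sigma\in\mathcal F$ with $\sigma\subseteq\vec S_{\ge\vec r}\setminus\{\overleftarrow r\}$ having an element $\ge\vec r$. $\vec S$ is $\mathcal F$-separable if for all $\vec r,\vec r\,'\in\vec S$ with $\vec r\le\vec r\,'$ such that $\mathcal F$ forces neither $\vec r$ nor $\overleftarrow{r'}$, there is $s_0\in S$ with an orientation $\vec s_0$ that is $\mathcal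 F$-linked to $\vec r$ and such that $\overleftarrow s_0$ is $\mathcal F$-linked to $\overleftarrow{r'}$. *)

theory Defs
  imports Main
begin

text \<open>The universe of separations is the whole type 'a (a lattice, supplying the
  partial order, supremum and infimum), together with an order-reversing
  involution invol.\<close>

definition universe_invol :: "('a::lattice \<Rightarrow> 'a) \<Rightarrow> bool" where
  "universe_invol invol \<longleftrightarrow>
     (\<forall>x. invol (invol x) = x) \<and> (\<forall>x y. x \<le> y \<longrightarrow> invol y \<le> invol x)"

definition sep_system :: "('a::lattice \<Rightarrow> 'a) \<Rightarrow> 'a set \<Rightarrow> bool" where
  "sep_system invol Sv \<longleftrightarrow> (\<forall>x\<in>Sv. invol x \<in> Sv)"

definition sep_of :: "('a \<Rightarrow> 'a) \<Rightarrow> 'a \<Rightarrow> 'a set" where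
  "sep_of invol x = {x, invol x}"

definition degenerate :: "('a \<Rightarrow> 'a) \<Rightarrow> 'a \<Rightarrow> bool" where
  "degenerate invol x \<longleftrightarrow> x = invol x"

definition trivial_in :: "('a::lattice \<Rightarrow> 'a) \<Rightarrow> 'a set \<Rightarrow> 'a \<Rightarrow> bool" where
  "trivial_in invol Sv x \<longleftrightarrow> (\<exists>s\<in>Sv. x < s \<and> x < invol s)"

definition is_star :: "('a::lattice \<Rightarrow> 'a) \<Rightarrow> 'a set \<Rightarrow> 'a set \<Rightarrow> bool" where
  "is_star invol Sv \<sigma> \<longleftrightarrow> \<sigma> \<noteq> {} \<and> \<sigma> \<subseteq> Sv \<and>
     (\<forall>x\<in>\<sigma>. \<forall>y\<in>\<sigma>. x \<noteq> y \<longrightarrow> x \<le> invol y)"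

definition orientation :: "('a \<Rightarrow> 'a) \<Rightarrow> 'a set \<Rightarrow> 'a set \<Rightarrow> bool" where
  "orientation invol Sv Or \<longleftrightarrow> Or \<subseteq> Sv \<and>
     (\<forall>x\<in>Sv. x \<in> Or \<or> invol x \<in> Or) \<and>
     (\<forall>x\<in>Sv. x \<in> Or \<and> invol x \<in> Or \<longrightarrow> x = invol x)"

definition consistent :: "('a::lattice \<Rightarrow> 'a) \<Rightarrow> 'a set \<Rightarrow> 'a set \<Rightarrow> bool" where
  "consistent invol Sv Or \<longleftrightarrow>
     \<not> (\<exists>x\<in>Sv. \<exists>y\<in>Sv. sep_of invol x \<noteq> sep_of invol y \<and> x < y \<and>
          invol x \<in> Or \<and> y \<in> Or)"

definition avoids :: "'a set \<Rightarrow> 'a set set \<Rightarrow> bool" where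
  "avoids Or F \<longleftrightarrow> (\<forall>\<sigma>\<in>F. \<not> \<sigma> \<subseteq> Or)"

definition is_F_tangle :: "('a::lattice \<Rightarrow> 'a) \<Rightarrow> 'a set \<Rightarrow> 'a set set \<Rightarrow> 'a set \<Rightarrow> bool" where
  "is_F_tangle invol Sv F Or \<longleftrightarrow>
     orientation invol Sv Or \<and> consistent invol Sv Or \<and> avoids Or F"

definition forces :: "('a \<Rightarrow> 'a) \<Rightarrow> 'a set set \<Rightarrow> 'a \<Rightarrow> bool" where
  "forces invol F r \<longleftrightarrow> {invol r} \<in> F \<or> degenerate invol r"

definition standard :: "('a::lattice \<Rightarrow> 'a) \<Rightarrow> 'a set \<Rightarrow> 'a set set \<Rightarrow> bool" where
  "standard invol Sv F \<longleftrightarrow> (\<forall>r\<in>Sv. trivial_in invol Sv r \<longrightarrow> forces invol F r)"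

text \<open>Finite trees on natural-number vertices: E is a set of directed edges
  (both orientations of each undirected edge), the graph is connected, and
  it has no cycles (every edge is a bridge).\<close>
definition is_tree :: "nat set \<Rightarrow> (nat \<times> nat) set \<Rightarrow> bool" where
  "is_tree V E \<longleftrightarrow> finite V \<and> V \<noteq> {} \<and> E \<subseteq> V \<times> V \<and>
     (\<forall>u v. (u, v) \<in> E \<longrightarrow> (v, u) \<in> E \<and> u \<noteq> v) \<and>
     (\<forall>u\<in>V. \<forall>v\<in>V. (u, v) \<in> E\<^sup>*) \<and>
     (\<forall>u v. (u, v) \<in> E \<longrightarrow> (u, v) \<notin> (E - {(u, v), (v, u)})\<^sup>*)"

definition is_S_tree ::
  "('a \<Rightarrow> 'a) \<Rightarrow> 'a set \<Rightarrow> nat set \<Rightarrow> (nat \<times> nat) set \<Rightarrow> (nat \<times> nat \<Rightarrow> 'a) \<Rightarrow> bool" where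
  "is_S_tree invol Sv V E \<alpha> \<longleftrightarrow> is_tree V E \<and> E \<noteq> {} \<and>
     (\<forall>u v. (u, v) \<in> E \<longrightarrow> \<alpha> (u, v) \<in> Sv \<and> \<alpha> (v, u) = invol (\<alpha> (u, v)))"

definition S_tree_over ::
  "('a \<Rightarrow> 'a) \<Rightarrow> 'a set \<Rightarrow> 'a set set \<Rightarrow> nat set \<Rightarrow> (nat \<times> nat) set \<Rightarrow> (nat \<times> nat \<Rightarrow> 'a) \<Rightarrow> bool" where
  "S_tree_over invol Sv F V E \<alpha> \<longleftrightarrow> is_S_tree invol Sv V E \<alpha> \<and>
     (\<forall>t\<in>V. {\<alpha> (y, t) | y. (y, t) \<in> E} \<in> F)"

definition S_ge :: "('a::lattice \<Rightarrow> 'a) \<Rightarrow> 'a set \<Rightarrow> 'a \<Rightarrow> 'a set" where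
  "S_ge invol Sv r = {x\<in>Sv. r \<le> x \<or> r \<le> invol x}"

text \<open>The shifting map f^r_{s0}: f(s) = s \<squnion> s0 and f(invol s) = invol (s \<squnion> s0)
  for s \<ge> r, s \<noteq> invol r (only meaningful for nontrivial nondegenerate r).\<close>
definition shift :: "('a::lattice \<Rightarrow> 'a) \<Rightarrow> 'a \<Rightarrow> 'a \<Rightarrow> 'a \<Rightarrow> 'a" where
  "shift invol r s0 x =
     (if r \<le> x \<and> x \<noteq> invol r then sup x s0 else invol (sup (invol x) s0))"

definition linked :: "('a::lattice \<Rightarrow> 'a) \<Rightarrow> 'a set \<Rightarrow> 'a \<Rightarrow> 'a \<Rightarrow> bool" where
  "linked invol Sv r s0 \<longleftrightarrow> s0 \<in> Sv \<and> r \<le> s0 \<and>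
     (\<forall>s\<in>Sv. r \<le> s \<and> s \<noteq> invol r \<longrightarrow> sup s s0 \<in> Sv)"

definition F_linked :: "('a::lattice \<Rightarrow> 'a) \<Rightarrow> 'a set \<Rightarrow> 'a set set \<Rightarrow> 'a \<Rightarrow> 'a \<Rightarrow> bool" where
  "F_linked invol Sv F r s0 \<longleftrightarrow> linked invol Sv r s0 \<and>
     (\<forall>\<sigma>\<in>F. is_star invol Sv \<sigma> \<and> \<sigma> \<subseteq> S_ge invol Sv r - {invol r} \<and> (\<exists>x\<in>\<sigma>. r \<le> x)
        \<longrightarrow> shift invol r s0 ` \<sigma> \<in> F)"

definition F_separable :: "('a::lattice \<Rightarrow> 'a) \<Rightarrow> 'a set \<Rightarrow> 'a set set \<Rightarrow> bool" where
  "F_separable invol Sv F \<longleftrightarrow>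
     (\<forall>r\<in>Sv. \<forall>r'\<in>Sv. r \<le> r' \<and> \<not> forces invol F r \<and> \<not> forces invol F (invol r')
        \<longrightarrow> (\<exists>s0\<in>Sv. F_linked invol Sv F r s0 \<and> F_linked invol Sv F (invol r') (invol s0)))"

end

theory Submission
  imports Defs
begin


inductive PL :: "('a \<Rightarrow> 'a) \<Rightarrow> 'a set set \<Rightarrow> 'a \<Rightarrow> bool" for i G where
  PLI: "\<sigma> \<in> G \<Longrightarrow> x \<in> \<sigma> \<Longrightarrow> (\<forall>w\<in>\<sigma> - {x}. PL i G (i w)) \<Longrightarrow> PL i G x"

definition Tr :: "('a \<Rightarrow> 'a) \<Rightarrow> 'a set set \<Rightarrow> bool" where
  "Tr i G \<longleftrightarrow> (\<exists>x. PL i G x \<and> PL i G (i x))"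

definition PLp :: "('a \<Rightarrow> 'a) \<Rightarrow> 'a set set \<Rightarrow> 'a set set \<Rightarrow> 'a \<Rightarrow> bool" where
  "PLp i G H x \<longleftrightarrow> (\<exists>\<sigma>\<in>G. x \<in> \<sigma> \<and> (\<forall>w\<in>\<sigma> - {x}. PL i H (i w)))"

inductive PLu :: "('a \<Rightarrow> 'a) \<Rightarrow> 'a set set \<Rightarrow> 'a set \<Rightarrow> 'a \<Rightarrow> bool" for i H s0 where
  top: "x \<in> s0 \<Longrightarrow> s0 \<in> H \<Longrightarrow> (\<forall>w\<in>s0 - {x}. PL i H (i w)) \<Longrightarrow> PLu i H s0 x"
| child: "\<sigma> \<in> H \<Longrightarrow> x \<in> \<sigma> \<Longrightarrow> (\<forall>w\<in>\<sigma> - {x}. PL i H (i w)) \<Longrightarrow> ww \<in> \<sigma> - {x}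
     \<Longrightarrow> PLu i H s0 (i ww) \<Longrightarrow> PLu i H s0 x"

lemma PL_mono: "PL i G x \<Longrightarrow> G \<subseteq> G' \<Longrightarrow> PL i G' x"
proof (induction rule: PL.induct)
  case (PLI \<sigma> x)
  then show ?case by (intro PL.PLI[where \<sigma>=\<sigma>]) auto
qed

lemma PL_single: "{x} \<in> G \<Longrightarrow> PL i G x"
  by (rule PLI[of "{x}"]) auto

lemma PLp_PL: "PLp i G H x \<Longrightarrow> G \<subseteq> H \<Longrightarrow> PL i H x"
  unfolding PLp_def by (metis PLI PL_mono subsetD)

lemma PL_subst: "PL i (insert {a} G) z \<Longrightarrow> PL i G a \<Longrightarrow> PL i G z"
proof (induction rule: PL.induct)
  case (PLI \<sigma> x)
  show ?case
  proof (cases "\<sigma> = {a}")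
    case True then show ?thesis using PLI by auto
  next
    case False then have "\<sigma> \<in> G" using PLI by auto
    then show ?thesis using PLI by (intro PL.PLI[where \<sigma>=\<sigma>]) auto
  qed
qed

definition starfam :: "('a::order \<Rightarrow> 'a) \<Rightarrow> 'a set set \<Rightarrow> bool" where
  "starfam i G \<longleftrightarrow> (\<forall>\<sigma>\<in>G. \<forall>x\<in>\<sigma>. \<forall>w\<in>\<sigma>. x \<noteq> w \<longrightarrow> x \<le> i w)"

lemma starfam_insert: "starfam i G \<Longrightarrow> starfam i (insert {a} G)"
  unfolding starfam_def by auto

lemma PL_C:
  assumes "PL i (insert {a} G) z" "starfam i G"
  shows "PL i G z \<or> z \<le> a"
  using assms(1)
proof (induction rule: PL.induct)
  case (PLI \<sigma> x)
  show ?case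
  proof (cases "\<sigma> = {a}")
    case True then show ?thesis using PLI by auto
  next
    case False
    hence sG: "\<sigma> \<in> G" using PLI by auto
    show ?thesis
    proof (cases "\<forall>w\<in>\<sigma> - {x}. PL i G (i w)")
      case True then show ?thesis using sG PLI(2) by (intro disjI1 PL.PLI[where \<sigma>=\<sigma>]) auto
    next
      case False
      then obtain w where w: "w \<in> \<sigma> - {x}" "\<not> PL i G (i w)" by auto
      with PLI have "i w \<le> a" by auto
      moreover have "x \<le> i w" using assms(2) sG w PLI(2) unfolding starfam_def by auto
      ultimately show ?thesis by auto
    qed
  qed
qed

lemma PL_split: "PL i (insert s0 G) x \<Longrightarrow> PL i G x \<or> PLu i (insert s0 G) s0 x"
proof (induction rule: PL.induct)
  case (PLI \<sigma> x)
  show ?case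
  proof (cases "\<sigma> = s0")
    case True then show ?thesis using PLI by (auto intro: PLu.top)
  next
    case False
    hence sG: "\<sigma> \<in> G" using PLI by auto
    show ?thesis
    proof (cases "\<forall>w\<in>\<sigma> - {x}. PL i G (i w)")
      case True then show ?thesis using sG PLI(2) by (intro disjI1 PL.PLI[where \<sigma>=\<sigma>]) auto
    next
      case False
      then obtain w where w: "w \<in> \<sigma> - {x}" "\<not> PL i G (i w)" by auto
      with PLI have "PLu i (insert s0 G) s0 (i w)" by auto
      moreover have "\<forall>w\<in>\<sigma> - {x}. PL i (insert s0 G) (i w)" using PLI by auto
      ultimately have "PLu i (insert s0 G) s0 x" using sG PLI(2) w(1)
        by - (rule PLu.child[where \<sigma>=\<sigma> and ww=w], auto)
      then show ?thesis by auto
    qed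
  qed
qed

lemma PLu_reroot:
  assumes "PLu i H s0 x" "PL i H (i x)" "\<And>x. i (i x) = x"
  shows "\<forall>y\<in>s0. PL i H (i y)"
  using assms(1,2)
proof (induction rule: PLu.induct)
  case (top x)
  then show ?case by auto
next
  case (child \<sigma> x ww)
  have "PL i H ww"
  proof (rule PLI[where \<sigma>=\<sigma>])
    show "\<sigma> \<in> H" "ww \<in> \<sigma>" using child by auto
    show "\<forall>w\<in>\<sigma> - {ww}. PL i H (i w)" using child by auto
  qed
  then show ?case using child assms(3) by auto
qed




locale SS =
  fixes i :: "'a::lattice \<Rightarrow> 'a" and Sv :: "'a set" and F :: "'a set set"
  assumes univ: "universe_invol i" and sys: "sep_system i Sv" and fin: "finite Sv"
    and FP: "F \<subseteq> Pow Sv" and Fstar: "\<forall>\<sigma>\<in>F. is_star i Sv \<sigma>"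
    and std: "standard i Sv F" and sepa: "F_separable i Sv F"
begin

lemma inv[simp]: "i (i x) = x" using univ unfolding universe_invol_def by auto
lemma anti: "x \<le> y \<Longrightarrow> i y \<le> i x" using univ unfolding universe_invol_def by auto
lemma anti_iff: "i y \<le> i x \<longleftrightarrow> x \<le> y" by (metis anti inv)
lemma inv_eq_iff: "i x = i y \<longleftrightarrow> x = y" by (metis inv)
lemma clo: "x \<in> Sv \<Longrightarrow> i x \<in> Sv" using sys unfolding sep_system_def by auto

lemma Fstar': "\<sigma> \<in> F \<Longrightarrow> x \<in> \<sigma> \<Longrightarrow> w \<in> \<sigma> \<Longrightarrow> x \<noteq> w \<Longrightarrow> x \<le> i w"
  using Fstar unfolding is_star_def by auto

lemma unforced: "x \<in> Sv \<Longrightarrow> \<not> forces i F x \<Longrightarrow> x \<noteq> i x \<and> \<not> trivial_in i Sv x"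
  using std unfolding standard_def forces_def degenerate_def by auto

definition ND where "ND = {x\<in>Sv. x \<noteq> i x}"
definition GP where "GP P = F \<union> (\<lambda>p. {i p}) ` P"
definition dc where "dc P \<longleftrightarrow> P \<subseteq> ND \<and> (\<forall>p\<in>P. \<forall>q\<in>ND. q \<le> p \<longrightarrow> q \<in> P)"

lemma GP_Pow: "P \<subseteq> Sv \<Longrightarrow> GP P \<subseteq> Pow Sv"
  using FP clo unfolding GP_def by auto

lemma GP_star: "starfam i (GP P)"
  unfolding starfam_def GP_def using Fstar' by auto

lemma shift_main:
  assumes dcP: "dc P" and nT: "\<not> Tr i (GP P)" and rS: "r \<in> Sv" and rf: "\<not> forces i F r"
    and lk: "F_linked i Sv F r s0"
  shows "PL i (insert {i r} (GP P)) x \<Longrightarrow> r \<le> x \<Longrightarrow> x \<noteq> i r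
     \<Longrightarrow> PLp i (GP P) (insert {i s0} (GP P)) (sup x s0)"
proof (induction rule: PL.induct)
  case (PLI \<sigma> x)
  define G where "G = GP P"
  define H' where "H' = insert {i s0} G"
  define f where "f = shift i r s0"
  have s0S: "s0 \<in> Sv" and rs0: "r \<le> s0" and lkS: "\<And>s. s \<in> Sv \<Longrightarrow> r \<le> s \<Longrightarrow> s \<noteq> i r \<Longrightarrow> sup s s0 \<in> Sv"
    using lk unfolding F_linked_def linked_def by auto
  have lkF: "\<And>\<sigma>. \<sigma> \<in> F \<Longrightarrow> is_star i Sv \<sigma> \<Longrightarrow> \<sigma> \<subseteq> S_ge i Sv r - {i r} \<Longrightarrow> (\<exists>x\<in>\<sigma>. r \<le> x)
     \<Longrightarrow> f ` \<sigma> \<in> F" using lk unfolding F_linked_def f_def by auto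
  have Pnd: "P \<subseteq> ND" and Pdc: "\<And>p q. p \<in> P \<Longrightarrow> q \<in> ND \<Longrightarrow> q \<le> p \<Longrightarrow> q \<in> P"
    using dcP unfolding dc_def by auto
  have PS: "P \<subseteq> Sv" using Pnd unfolding ND_def by auto
  have nt: "r \<noteq> i r" "\<not> trivial_in i Sv r" using unforced[OF rS rf] by auto
  have sG: "\<sigma> \<in> G" using PLI G_def by auto
  have sS: "\<sigma> \<subseteq> Sv" using sG GP_Pow[OF PS] G_def by auto
  have xS: "x \<in> Sv" using sS PLI by auto
  have star: "\<And>w. w \<in> \<sigma> \<Longrightarrow> w \<noteq> x \<Longrightarrow> x \<le> i w"
    using GP_star sG PLI(2) G_def unfolding starfam_def by auto
  have GH: "G \<subseteq> H'" unfolding H'_def by auto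
  show ?case
  proof (cases "i r \<in> \<sigma>")
    case True
    have "i r \<noteq> x" using PLI by auto
    hence "x \<le> r" using star[OF True] by auto
    hence "x = r" using PLI by auto
    have "PL i (insert {i r} (GP P)) (i (i r)) \<and> (r \<le> i (i r) \<longrightarrow> i (i r) \<noteq> i r \<longrightarrow>
        PLp i (GP P) (insert {i s0} (GP P)) (sup (i (i r)) s0))"
      using PLI(3) True \<open>i r \<noteq> x\<close> by blast
    then show ?thesis using \<open>x = r\<close> nt by auto
  next
    case False
    have fx: "f x = sup x s0" using PLI f_def unfolding shift_def by auto
    have ch: "PL i H' (i (f w))" if w: "w \<in> \<sigma>" "w \<noteq> x" for w
    proof (cases "w = r")
      case True
      have "f w = s0" using True nt rs0 f_def unfolding shift_def by (auto simp: sup_absorb2)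
      then show ?thesis unfolding H'_def by (auto intro: PL_single)
    next
      case False
      have rw: "r \<le> i w" using star[OF w] PLI(4) by auto
      have wir: "w \<noteq> i r" using \<open>i r \<notin> \<sigma>\<close> w by auto
      have "\<not> r \<le> w"
      proof
        assume "r \<le> w"
        have "r < w" using \<open>r \<le> w\<close> False by auto
        moreover have "r < i w" using rw wir by (metis inv order.not_eq_order_implies_strict)
        moreover have "w \<in> Sv" using sS w by auto
        ultimately show False using nt(2) unfolding trivial_in_def by auto
      qed
      hence fw: "f w = i (sup (i w) s0)" using f_def unfolding shift_def by auto
      have "PL i (insert {i r} (GP P)) (i w) \<and> (r \<le> i w \<longrightarrow> i w \<noteq> i r \<longrightarrow>
        PLp i (GP P) (insert {i s0} (GP P)) (sup (i w) s0))"
        using PLI(3) w by blast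
      hence "PLp i G H' (sup (i w) s0)" using rw False G_def H'_def by (auto simp: inv_eq_iff)
      then show ?thesis using fw PLp_PL[OF _ GH] by auto
    qed
    show ?thesis
    proof (cases "\<sigma> \<in> F")
      case True
      have "f ` \<sigma> \<in> F"
      proof (rule lkF[OF True])
        show "is_star i Sv \<sigma>" using Fstar True by auto
        show "\<exists>x\<in>\<sigma>. r \<le> x" using PLI by auto
        show "\<sigma> \<subseteq> S_ge i Sv r - {i r}"
        proof
          fix v assume v: "v \<in> \<sigma>"
          have "r \<le> v \<or> r \<le> i v"
          proof (cases "v = x")
            case True then show ?thesis using PLI by auto
          next
            case False then show ?thesis using star[OF v] PLI(4) by (auto intro: order_trans)
          qed
          then show "v \<in> S_ge i Sv r - {i r}" using v sS \<open>i r \<notin> \<sigma>\<close> unfolding S_ge_def by auto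
        qed
      qed
      moreover have "\<forall>v\<in>f ` \<sigma> - {sup x s0}. PL i H' (i v)"
        using ch fx by auto
      moreover have "sup x s0 \<in> f ` \<sigma>" using fx PLI(2) by (metis image_eqI)
      ultimately show ?thesis unfolding PLp_def G_def H'_def GP_def
        by (intro bexI[of _ "f ` \<sigma>"]) (auto simp: G_def H'_def)
    next
      case notF: False
      then obtain p where p: "p \<in> P" "\<sigma> = {i p}" using sG G_def unfolding GP_def by auto
      have xp: "x = i p" using p PLI by auto
      define y where "y = sup x s0"
      have yS: "y \<in> Sv" using lkS[OF xS PLI(4) PLI(5)] y_def by auto
      have xy: "x \<le> y" using y_def by auto
      have qp: "i y \<le> p" using anti[OF xy] xp by auto
      show ?thesis
      proof (cases "i y = i (i y)")
        case False
        hence "i y \<in> ND" using clo[OF yS] unfolding ND_def by auto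
        hence "i y \<in> P" using Pdc[OF p(1) _ qp] by auto
        hence "{y} \<in> G" unfolding G_def GP_def by (metis image_eqI inv UnI2)
        then show ?thesis unfolding PLp_def y_def G_def by auto
      next
        case True
        hence yy: "y = i y" by auto
        have pnd: "p \<noteq> i p" using p(1) Pnd unfolding ND_def by auto
        have "x \<noteq> y" using yy pnd xp by (metis inv)
        hence "x < y" using xy by auto
        moreover have "x < i y" using \<open>x < y\<close> yy by auto
        ultimately have "trivial_in i Sv x" using yS unfolding trivial_in_def by auto
        hence "forces i F x" using std xS unfolding standard_def by auto
        hence "{p} \<in> F" using xp pnd unfolding forces_def degenerate_def by auto
        hence "PL i (GP P) p" unfolding GP_def by (auto intro: PL_single)
        moreover have "PL i (GP P) (i p)" using p unfolding GP_def by (auto intro: PL_single)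
        ultimately have "Tr i (GP P)" unfolding Tr_def by auto
        then show ?thesis using nT by auto
      qed
    qed
  qed
qed

lemma glue:
  assumes st: "starfam i G" and h1: "PLp i G (insert {i a} G) a" and h2: "PLp i G (insert {a} G) (i a)"
  shows "Tr i G"
proof -
  obtain \<sigma>1 where s1: "\<sigma>1 \<in> G" "a \<in> \<sigma>1" "\<forall>w\<in>\<sigma>1 - {a}. PL i (insert {i a} G) (i w)"
    using h1 unfolding PLp_def by auto
  obtain \<sigma>2 where s2: "\<sigma>2 \<in> G" "i a \<in> \<sigma>2" "\<forall>w\<in>\<sigma>2 - {i a}. PL i (insert {a} G) (i w)"
    using h2 unfolding PLp_def by auto
  have c1: "\<forall>w\<in>\<sigma>1 - {a}. PL i G (i w) \<or> i w \<le> i a" using s1(3) PL_C[OF _ st] by blast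
  have c2: "\<forall>w\<in>\<sigma>2 - {i a}. PL i G (i w) \<or> i w \<le> a" using s2(3) PL_C[OF _ st] by blast
  have P1: "PL i (insert {i a} G) a" and P2: "PL i (insert {a} G) (i a)"
    using PLp_PL[OF h1] PLp_PL[OF h2] by auto
  show ?thesis
  proof (cases "\<forall>w\<in>\<sigma>1 - {a}. PL i G (i w)")
    case True
    hence "PL i G a" using s1 by (intro PL.PLI[where \<sigma>=\<sigma>1]) auto
    moreover from PL_subst[OF P2 this] have "PL i G (i a)" .
    ultimately show ?thesis unfolding Tr_def by auto
  next
    case F1: False
    show ?thesis
    proof (cases "\<forall>w\<in>\<sigma>2 - {i a}. PL i G (i w)")
      case True
      hence "PL i G (i a)" using s2 by (intro PL.PLI[where \<sigma>=\<sigma>2]) auto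
      moreover from PL_subst[OF _ this] P1 have "PL i G a" by simp
      ultimately show ?thesis unfolding Tr_def by auto
    next
      case False
      then obtain w2 where w2: "w2 \<in> \<sigma>2" "w2 \<noteq> i a" "i w2 \<le> a" using c2 by auto
      obtain w1 where w1: "w1 \<in> \<sigma>1" "w1 \<noteq> a" "i w1 \<le> i a" using c1 F1 by auto
      have "a \<le> i w1" using st s1 w1 unfolding starfam_def by auto
      have "i a \<le> i w2" using st s2 w2 unfolding starfam_def by auto
      have "a = i a" using \<open>a \<le> i w1\<close> w1(3) \<open>i a \<le> i w2\<close> w2(3) by (metis order.trans order.antisym)
      hence "i w1 = a" using \<open>a \<le> i w1\<close> w1(3) by (metis order.antisym)
      hence "w1 = a" using \<open>a = i a\<close> by (metis inv)
      then show ?thesis using w1 by auto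
    qed
  qed
qed

lemma B1:
  assumes "\<not> Tr i G" "Tr i (insert {i r} G)"
  shows "PL i (insert {i r} G) r"
proof -
  obtain x where x: "PL i (insert {i r} G) x" "PL i (insert {i r} G) (i x)" using assms(2) unfolding Tr_def by auto
  have inv': "\<And>x. i (i x) = x" by simp
  from PL_split[OF x(1)] PL_split[OF x(2)] assms(1)
  have "PLu i (insert {i r} G) {i r} x \<or> PLu i (insert {i r} G) {i r} (i x)" unfolding Tr_def by auto
  then show ?thesis
  proof
    assume "PLu i (insert {i r} G) {i r} x"
    from PLu_reroot[OF this x(2) inv'] show ?thesis by simp
  next
    assume "PLu i (insert {i r} G) {i r} (i x)"
    from PLu_reroot[OF this _ inv'] x(1) show ?thesis by simp
  qed
qed

lemma lemmaB:
  assumes dcP: "dc P" and nT: "\<not> Tr i (GP P)" and rS: "r \<in> Sv" and r'S: "r' \<in> Sv" and rr: "r \<le> r'"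
    and f1: "\<not> forces i F r" and f2: "\<not> forces i F (i r')"
    and t1: "Tr i (insert {i r} (GP P))" and t2: "Tr i (insert {r'} (GP P))"
  shows False
proof -
  obtain s0 where s0: "s0 \<in> Sv" "F_linked i Sv F r s0" "F_linked i Sv F (i r') (i s0)"
    using sepa rS r'S rr f1 f2 unfolding F_separable_def by blast
  have rs0: "r \<le> s0" and rs0': "i r' \<le> i s0" using s0 unfolding F_linked_def linked_def by auto
  have nd1: "r \<noteq> i r" using unforced[OF rS f1] by auto
  have nd2: "i r' \<noteq> i (i r')" using unforced[OF clo[OF r'S] f2] by auto
  have "PL i (insert {i r} (GP P)) r" using B1[OF nT t1] .
  from shift_main[OF dcP nT rS f1 s0(2) this order.refl nd1]
  have A: "PLp i (GP P) (insert {i s0} (GP P)) s0" using rs0 by (simp add: sup_absorb2)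
  have t2': "Tr i (insert {i (i r')} (GP P))" using t2 by simp
  have "PL i (insert {i (i r')} (GP P)) (i r')" using B1[OF nT t2'] .
  from shift_main[OF dcP nT clo[OF r'S] f2 s0(3) this order.refl nd2]
  have B: "PLp i (GP P) (insert {s0} (GP P)) (i s0)" using rs0' by (simp add: sup_absorb2)
  from glue[OF GP_star A B] nT show False by auto
qed

lemma final:
  assumes dcP: "dc P" and nT: "\<not> Tr i (GP P)" and all: "\<forall>s\<in>ND. s \<in> P \<or> i s \<in> P"
  shows "is_F_tangle i Sv F (P \<union> {x\<in>Sv. x = i x})"
proof -
  define G where "G = GP P"
  define Ot where "Ot = P \<union> {x\<in>Sv. x = i x}"
  have Pnd: "P \<subseteq> ND" and Pdc: "\<And>p q. p \<in> P \<Longrightarrow> q \<in> ND \<Longrightarrow> q \<le> p \<Longrightarrow> q \<in> P"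
    using dcP unfolding dc_def by auto
  have PS: "P \<subseteq> Sv" using Pnd unfolding ND_def by auto
  have sing: "\<And>p. p \<in> P \<Longrightarrow> PL i G (i p)" unfolding G_def GP_def by (auto intro: PL_single)
  have FG: "\<And>\<sigma>. \<sigma> \<in> F \<Longrightarrow> \<sigma> \<in> G" unfolding G_def GP_def by auto
  have nT': "\<And>x. PL i G x \<Longrightarrow> PL i G (i x) \<Longrightarrow> False" using nT unfolding Tr_def G_def by auto
  have both: "\<And>p. p \<in> P \<Longrightarrow> i p \<in> P \<Longrightarrow> False"
    using sing nT' by (metis inv)
  have ndI: "\<And>x. x \<in> Sv \<Longrightarrow> x \<noteq> i x \<Longrightarrow> x \<in> ND" unfolding ND_def by auto
  have orient: "orientation i Sv Ot"
    unfolding orientation_def Ot_def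
  proof (intro conjI ballI impI)
    show "P \<union> {x \<in> Sv. x = i x} \<subseteq> Sv" using PS by auto
    fix x assume xS: "x \<in> Sv"
    show "x \<in> P \<union> {x \<in> Sv. x = i x} \<or> i x \<in> P \<union> {x \<in> Sv. x = i x}"
      using all ndI[OF xS] xS by auto
    assume "x \<in> P \<union> {x \<in> Sv. x = i x} \<and> i x \<in> P \<union> {x \<in> Sv. x = i x}"
    then show "x = i x" using both by (metis (mono_tags, lifting) Un_iff inv mem_Collect_eq)
  qed
  have cons: "consistent i Sv Ot"
    unfolding consistent_def
  proof
    assume "\<exists>x\<in>Sv. \<exists>y\<in>Sv. sep_of i x \<noteq> sep_of i y \<and> x < y \<and> i x \<in> Ot \<and> y \<in> Ot"
    then obtain x y where xy: "x \<in> Sv" "y \<in> Sv" "x < y" "i x \<in> Ot" "y \<in> Ot" by auto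
    have ixy: "i y < i x" using xy(3) anti by (metis inv order.strict_iff_order)
    show False
    proof (cases "y \<in> P")
      case True
      show False
      proof (cases "x = i x")
        case True
        have "i y < y" using ixy xy(3) True by auto
        hence "i y \<in> ND" using clo[OF xy(2)] unfolding ND_def by auto
        hence "i y \<in> P" using Pdc[OF \<open>y \<in> P\<close>] \<open>i y < y\<close> by auto
        then show False using both \<open>y \<in> P\<close> by auto
      next
        case False
        hence "x \<in> P" using Pdc[OF \<open>y \<in> P\<close> ndI[OF xy(1)]] xy(3) by auto
        moreover have "i x \<in> P" using xy(4) False unfolding Ot_def by auto
        ultimately show False using both by auto
      qed
    next
      case False
      hence yy: "y = i y" using xy(5) unfolding Ot_def by auto
      have "x \<noteq> i x" using ixy yy xy(3) by auto
      have "trivial_in i Sv x" using xy(3) yy xy(2) unfolding trivial_in_def by (metis)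
      hence "{i x} \<in> F" using std xy(1) \<open>x \<noteq> i x\<close> unfolding standard_def forces_def degenerate_def by auto
      hence "PL i G (i x)" using FG by (auto intro: PL_single)
      moreover have "i x \<in> P" using xy(4) \<open>x \<noteq> i x\<close> unfolding Ot_def by auto
      ultimately show False using sing nT' by (metis inv)
    qed
  qed
  have av: "avoids Ot F"
    unfolding avoids_def
  proof (intro ballI notI)
    fix \<sigma> assume sF: "\<sigma> \<in> F" and sO: "\<sigma> \<subseteq> Ot"
    have ne: "\<sigma> \<noteq> {}" using Fstar sF unfolding is_star_def by auto
    have sS: "\<sigma> \<subseteq> Sv" using FP sF by auto
    show False
    proof (cases "\<exists>d\<in>\<sigma>. d = i d")
      case True
      then obtain d where d: "d \<in> \<sigma>" "d = i d" by auto
      have "\<forall>w\<in>\<sigma> - {d}. PL i G (i w)"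
      proof
        fix w assume w: "w \<in> \<sigma> - {d}"
        have "w \<noteq> i w"
        proof
          assume "w = i w"
          have a1: "d \<le> i w" using Fstar'[OF sF d(1), of w] w by auto
          have a2: "w \<le> i d" using Fstar'[OF sF _ d(1), of w] w by auto
          show False using a1 a2 \<open>w = i w\<close> d w by (metis Diff_iff insertI1 order.antisym)
        qed
        hence "w \<in> P" using sO w unfolding Ot_def by auto
        then show "PL i G (i w)" using sing by auto
      qed
      hence "PL i G d" using sF FG d by (intro PL.PLI[where \<sigma>=\<sigma>]) auto
      then show False using nT' d by metis
    next
      case False
      hence allP: "\<forall>w\<in>\<sigma>. w \<in> P" using sO unfolding Ot_def by auto
      obtain x where x: "x \<in> \<sigma>" using ne by auto
      have "PL i G x" using sF FG x allP sing by (intro PL.PLI[where \<sigma>=\<sigma>]) auto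
      then show False using nT' sing allP x by auto
    qed
  qed
  show ?thesis unfolding is_F_tangle_def using orient cons av Ot_def by auto
qed

lemma main:
  assumes "dc P" "\<not> Tr i (GP P)"
  shows "\<exists>Ot. is_F_tangle i Sv F Ot"
  using assms
proof (induction "card (ND - P)" arbitrary: P rule: less_induct)
  case less
  have finND: "finite ND" using fin unfolding ND_def by auto
  have Pnd: "P \<subseteq> ND" and Pdc: "\<And>p q. p \<in> P \<Longrightarrow> q \<in> ND \<Longrightarrow> q \<le> p \<Longrightarrow> q \<in> P"
    using less.prems unfolding dc_def by auto
  show ?case
  proof (cases "\<forall>s\<in>ND. s \<in> P \<or> i s \<in> P")
    case True
    then show ?thesis using final less.prems by blast
  next
    case False
    define U where "U = {x\<in>ND. x \<notin> P \<and> i x \<notin> P}"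
    have finU: "finite U" using finND unfolding U_def by auto
    have NDi: "\<And>x. x \<in> ND \<Longrightarrow> i x \<in> ND" unfolding ND_def using clo by auto
    have Ui: "\<And>x. x \<in> U \<Longrightarrow> i x \<in> U" unfolding U_def using NDi by auto
    obtain s where "s \<in> U" using False unfolding U_def by auto
    obtain z where z: "z \<in> U" "\<forall>b\<in>U. b \<le> z \<longrightarrow> z = b"
      using finite_has_minimal[OF finU] \<open>s \<in> U\<close> by blast
    obtain z' where z': "z' \<in> U" "z' \<le> i z" "\<forall>b\<in>U. b \<le> z' \<longrightarrow> z' = b"
      using finite_has_minimal2[OF finU Ui[OF z(1)]] by blast
    have addmin: "dc (insert m P) \<and> card (ND - insert m P) < card (ND - P)
        \<and> GP (insert m P) = insert {i m} (GP P)"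
      if m: "m \<in> U" "\<forall>b\<in>U. b \<le> m \<longrightarrow> m = b" for m
    proof (intro conjI)
      have mND: "m \<in> ND" "m \<notin> P" "i m \<notin> P" using m unfolding U_def by auto
      show "GP (insert m P) = insert {i m} (GP P)" unfolding GP_def by auto
      show "card (ND - insert m P) < card (ND - P)"
        using mND finND by (intro psubset_card_mono) auto
      show "dc (insert m P)"
        unfolding dc_def
      proof (intro conjI ballI impI)
        show "insert m P \<subseteq> ND" using mND Pnd by auto
        fix p q assume p: "p \<in> insert m P" and q: "q \<in> ND" and qp: "q \<le> p"
        show "q \<in> insert m P"
        proof (cases "p \<in> P")
          case True then show ?thesis using Pdc q qp by auto
        next
          case False
          hence "p = m" using p by auto
          show ?thesis
          proof (rule ccontr)
            assume nq: "q \<notin> insert m P"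
            hence "q \<notin> U" using m(2) qp \<open>p = m\<close> by auto
            hence "i q \<in> P" using q nq unfolding U_def by auto
            moreover have "i m \<le> i q" using anti qp \<open>p = m\<close> by auto
            ultimately have "i m \<in> P" using Pdc NDi[OF mND(1)] by auto
            then show False using mND by auto
          qed
        qed
      qed
    qed
    note az = addmin[OF z(1) z(2)] and az' = addmin[OF z'(1) z'(3)]
    show ?thesis
    proof (cases "Tr i (GP (insert z P))")
      case False
      then show ?thesis using less.hyps az by blast
    next
      case T1: True
      show ?thesis
      proof (cases "Tr i (GP (insert z' P))")
        case False
        then show ?thesis using less.hyps az' by blast
      next
        case T2: True
        have zS: "z \<in> Sv" "z' \<in> Sv" "z \<noteq> i z" "z' \<noteq> i z'" using z z' unfolding U_def ND_def by auto
        have sameG: "\<And>m. {i m} \<in> F \<Longrightarrow> insert {i m} (GP P) = GP P" unfolding GP_def by auto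
        have f1: "\<not> forces i F z'"
        proof
          assume "forces i F z'"
          hence "{i z'} \<in> F" using zS unfolding forces_def degenerate_def by auto
          then show False using T2 az' sameG less.prems(2) by metis
        qed
        have f2: "\<not> forces i F (i (i z))"
        proof
          assume "forces i F (i (i z))"
          hence "{i z} \<in> F" using zS unfolding forces_def degenerate_def by auto
          then show False using T1 az sameG less.prems(2) by metis
        qed
        show ?thesis
          using lemmaB[OF less.prems(1,2) zS(2) clo[OF zS(1)] z'(2) f1 f2] T1 T2 az az' by auto
      qed
    qed
  qed
qed

end



lemma rtrancl_map_gen:
  assumes "(a, b) \<in> R\<^sup>*" "\<And>x y. (x, y) \<in> R \<Longrightarrow> (h x, h y) \<in> S\<^sup>*"
  shows "(h a, h b) \<in> S\<^sup>*"
  using assms(1)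
proof (induction rule: rtrancl_induct)
  case base then show ?case by simp
next
  case (step y z) then show ?case using assms(2) rtrancl_trans by metis
qed

lemma rtrancl_closed:
  assumes "(a, b) \<in> R\<^sup>*" "a \<in> A" "\<And>x y. (x, y) \<in> R \<Longrightarrow> x \<in> A \<Longrightarrow> y \<in> A"
  shows "b \<in> A"
  using assms(1,2) by (induction rule: rtrancl_induct) (auto intro: assms(3))

lemma rename_tree:
  assumes T: "is_tree V E" and inj: "inj_on f V"
  shows "is_tree (f ` V) ((\<lambda>(a, b). (f a, f b)) ` E)"
proof -
  let ?E = "(\<lambda>(a, b). (f a, f b)) ` E"
  have finV: "finite V" and neV: "V \<noteq> {}" and EV: "E \<subseteq> V \<times> V"
    and sym: "\<And>u v. (u, v) \<in> E \<Longrightarrow> (v, u) \<in> E \<and> u \<noteq> v"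
    and con: "\<And>u v. u \<in> V \<Longrightarrow> v \<in> V \<Longrightarrow> (u, v) \<in> E\<^sup>*"
    and br: "\<And>u v. (u, v) \<in> E \<Longrightarrow> (u, v) \<notin> (E - {(u, v), (v, u)})\<^sup>*"
    using T unfolding is_tree_def by auto
  define g where "g = inv_into V f"
  have gf: "\<And>x. x \<in> V \<Longrightarrow> g (f x) = x" using inj unfolding g_def by auto
  have mem: "(x, y) \<in> ?E \<longleftrightarrow> (\<exists>a b. (a, b) \<in> E \<and> x = f a \<and> y = f b)" for x y by auto
  have p1: "finite (f ` V)" using finV by auto
  have p2: "f ` V \<noteq> {}" using neV by auto
  have p3: "?E \<subseteq> f ` V \<times> f ` V" using EV by auto
  have p4: "\<forall>u v. (u, v) \<in> ?E \<longrightarrow> (v, u) \<in> ?E \<and> u \<noteq> v"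
  proof (intro allI impI)
    fix u v assume "(u, v) \<in> ?E"
    then obtain a b where ab: "(a, b) \<in> E" "u = f a" "v = f b" by auto
    have "a \<in> V" "b \<in> V" using ab EV by auto
    then show "(v, u) \<in> ?E \<and> u \<noteq> v" using ab sym inj unfolding inj_on_def by (auto intro!: image_eqI[of _ _ "(b, a)"])
  qed
  have p5: "\<forall>u\<in>f ` V. \<forall>v\<in>f ` V. (u, v) \<in> ?E\<^sup>*"
  proof (intro ballI)
    fix u v assume "u \<in> f ` V" "v \<in> f ` V"
    then obtain a b where ab: "a \<in> V" "b \<in> V" "u = f a" "v = f b" by auto
    have "(f a, f b) \<in> ?E\<^sup>*"
      by (rule rtrancl_map_gen[OF con[OF ab(1,2)]]) (auto intro!: r_into_rtrancl)
    then show "(u, v) \<in> ?E\<^sup>*" using ab by simp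
  qed
  have p6: "\<forall>u v. (u, v) \<in> ?E \<longrightarrow> (u, v) \<notin> (?E - {(u, v), (v, u)})\<^sup>*"
  proof (intro allI impI)
    fix u v assume uv: "(u, v) \<in> ?E"
    then obtain a b where ab: "(a, b) \<in> E" "u = f a" "v = f b" by auto
    have abV: "a \<in> V" "b \<in> V" using ab EV by auto
    show "(u, v) \<notin> (?E - {(u, v), (v, u)})\<^sup>*"
    proof
      assume h: "(u, v) \<in> (?E - {(u, v), (v, u)})\<^sup>*"
      have "(g u, g v) \<in> (E - {(a, b), (b, a)})\<^sup>*"
      proof (rule rtrancl_map_gen[OF h])
        fix x y assume xy: "(x, y) \<in> ?E - {(u, v), (v, u)}"
        then obtain c d where cd: "(c, d) \<in> E" "x = f c" "y = f d" by auto
        have "(c, d) \<noteq> (a, b)" "(c, d) \<noteq> (b, a)" using xy cd ab by auto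
        moreover have "c \<in> V" "d \<in> V" using cd EV by auto
        ultimately show "(g x, g y) \<in> (E - {(a, b), (b, a)})\<^sup>*" using cd gf by auto
      qed
      then show False using br[OF ab(1)] ab gf abV by auto
    qed
  qed
  show ?thesis unfolding is_tree_def using p1 p2 p3 p4 p5 p6 by blast
qed

lemma join_tree:
  assumes T1: "is_tree V1 E1" and T2: "is_tree V2 E2" and dj: "V1 \<inter> V2 = {}"
    and u: "u \<in> V1" and v: "v \<in> V2"
  shows "is_tree (V1 \<union> V2) (E1 \<union> E2 \<union> {(u, v), (v, u)})"
proof -
  let ?E = "E1 \<union> E2 \<union> {(u, v), (v, u)}"
  have fin1: "finite V1" and EV1: "E1 \<subseteq> V1 \<times> V1"
    and sym1: "\<And>a b. (a, b) \<in> E1 \<Longrightarrow> (b, a) \<in> E1 \<and> a \<noteq> b"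
    and con1: "\<And>a b. a \<in> V1 \<Longrightarrow> b \<in> V1 \<Longrightarrow> (a, b) \<in> E1\<^sup>*"
    and br1: "\<And>a b. (a, b) \<in> E1 \<Longrightarrow> (a, b) \<notin> (E1 - {(a, b), (b, a)})\<^sup>*"
    using T1 unfolding is_tree_def by auto
  have fin2: "finite V2" and EV2: "E2 \<subseteq> V2 \<times> V2"
    and sym2: "\<And>a b. (a, b) \<in> E2 \<Longrightarrow> (b, a) \<in> E2 \<and> a \<noteq> b"
    and con2: "\<And>a b. a \<in> V2 \<Longrightarrow> b \<in> V2 \<Longrightarrow> (a, b) \<in> E2\<^sup>*"
    and br2: "\<And>a b. (a, b) \<in> E2 \<Longrightarrow> (a, b) \<notin> (E2 - {(a, b), (b, a)})\<^sup>*"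
    using T2 unfolding is_tree_def by auto
  have uv: "u \<noteq> v" using u v dj by auto
  have sub1: "E1\<^sup>* \<subseteq> ?E\<^sup>*" by (rule rtrancl_mono) auto
  have sub2: "E2\<^sup>* \<subseteq> ?E\<^sup>*" by (rule rtrancl_mono) auto
  have uvE: "(u, v) \<in> ?E\<^sup>*" "(v, u) \<in> ?E\<^sup>*" by auto
  have p1: "finite (V1 \<union> V2)" "V1 \<union> V2 \<noteq> {}" using fin1 fin2 u by auto
  have p3: "?E \<subseteq> (V1 \<union> V2) \<times> (V1 \<union> V2)" using EV1 EV2 u v by auto
  have p4: "\<forall>a b. (a, b) \<in> ?E \<longrightarrow> (b, a) \<in> ?E \<and> a \<noteq> b" using sym1 sym2 uv by auto
  have p5: "\<forall>a\<in>V1 \<union> V2. \<forall>b\<in>V1 \<union> V2. (a, b) \<in> ?E\<^sup>*"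
  proof (intro ballI)
    fix a b assume a: "a \<in> V1 \<union> V2" and b: "b \<in> V1 \<union> V2"
    show "(a, b) \<in> ?E\<^sup>*"
    proof (cases "a \<in> V1")
      case True
      show ?thesis
      proof (cases "b \<in> V1")
        case True then show ?thesis using \<open>a \<in> V1\<close> con1 sub1 by auto
      next
        case False
        hence "b \<in> V2" using b by auto
        have "(a, u) \<in> ?E\<^sup>*" using con1[OF \<open>a \<in> V1\<close> u] sub1 by auto
        moreover have "(v, b) \<in> ?E\<^sup>*" using con2[OF v \<open>b \<in> V2\<close>] sub2 by auto
        ultimately show ?thesis using uvE by (meson rtrancl_trans)
      qed
    next
      case False
      hence "a \<in> V2" using a by auto
      show ?thesis
      proof (cases "b \<in> V2")
        case True then show ?thesis using \<open>a \<in> V2\<close> con2 sub2 by auto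
      next
        case False
        hence "b \<in> V1" using b by auto
        have "(a, v) \<in> ?E\<^sup>*" using con2[OF \<open>a \<in> V2\<close> v] sub2 by auto
        moreover have "(u, b) \<in> ?E\<^sup>*" using con1[OF u \<open>b \<in> V1\<close>] sub1 by auto
        ultimately show ?thesis using uvE by (meson rtrancl_trans)
      qed
    qed
  qed
  have p6: "\<forall>a b. (a, b) \<in> ?E \<longrightarrow> (a, b) \<notin> (?E - {(a, b), (b, a)})\<^sup>*"
  proof (intro allI impI)
    fix a b assume ab: "(a, b) \<in> ?E"
    show "(a, b) \<notin> (?E - {(a, b), (b, a)})\<^sup>*"
    proof
      assume h: "(a, b) \<in> (?E - {(a, b), (b, a)})\<^sup>*"
      consider "(a, b) \<in> E1" | "(a, b) \<in> E2" | "(a, b) = (u, v) \<or> (a, b) = (v, u)" using ab by auto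
      then show False
      proof cases
        case 1
        have abV: "a \<in> V1" "b \<in> V1" using 1 EV1 by auto
        define h1 where "h1 x = (if x \<in> V1 then x else u)" for x
        have "(h1 a, h1 b) \<in> (E1 - {(a, b), (b, a)})\<^sup>*"
        proof (rule rtrancl_map_gen[OF h])
          fix x y assume xy: "(x, y) \<in> ?E - {(a, b), (b, a)}"
          show "(h1 x, h1 y) \<in> (E1 - {(a, b), (b, a)})\<^sup>*"
          proof (cases "(x, y) \<in> E1")
            case True
            then have "x \<in> V1" "y \<in> V1" using EV1 by auto
            then show ?thesis using True xy unfolding h1_def by auto
          next
            case False
            hence "(x, y) \<in> E2 \<or> (x, y) = (u, v) \<or> (x, y) = (v, u)" using xy by auto
            hence "h1 x = u \<and> h1 y = u" using EV2 dj u v unfolding h1_def by auto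
            then show ?thesis by auto
          qed
        qed
        then show False using br1[OF 1] abV unfolding h1_def by auto
      next
        case 2
        have abV: "a \<in> V2" "b \<in> V2" using 2 EV2 by auto
        define h2 where "h2 x = (if x \<in> V2 then x else v)" for x
        have "(h2 a, h2 b) \<in> (E2 - {(a, b), (b, a)})\<^sup>*"
        proof (rule rtrancl_map_gen[OF h])
          fix x y assume xy: "(x, y) \<in> ?E - {(a, b), (b, a)}"
          show "(h2 x, h2 y) \<in> (E2 - {(a, b), (b, a)})\<^sup>*"
          proof (cases "(x, y) \<in> E2")
            case True
            then have "x \<in> V2" "y \<in> V2" using EV2 by auto
            then show ?thesis using True xy unfolding h2_def by auto
          next
            case False
            hence "(x, y) \<in> E1 \<or> (x, y) = (u, v) \<or> (x, y) = (v, u)" using xy by auto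
            hence "h2 x = v \<and> h2 y = v" using EV1 dj u v unfolding h2_def by auto
            then show ?thesis by auto
          qed
        qed
        then show False using br2[OF 2] abV unfolding h2_def by auto
      next
        case 3
        have R: "?E - {(a, b), (b, a)} = E1 \<union> E2" using 3 EV1 EV2 dj u v by auto
        have cl: "\<And>x y. (x, y) \<in> E1 \<union> E2 \<Longrightarrow> x \<in> V1 \<Longrightarrow> y \<in> V1"
          using EV1 EV2 dj by auto
        from 3 show False
        proof
          assume "(a, b) = (u, v)"
          then have "v \<in> V1" using rtrancl_closed[of u v "E1 \<union> E2" V1] h R u cl by auto
          then show False using v dj by auto
        next
          assume "(a, b) = (v, u)"
          have cl2: "\<And>x y. (x, y) \<in> E1 \<union> E2 \<Longrightarrow> x \<in> V2 \<Longrightarrow> y \<in> V2"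
            using EV1 EV2 dj by auto
          then have "u \<in> V2" using rtrancl_closed[of v u "E1 \<union> E2" V2] h R v \<open>(a, b) = (v, u)\<close> by auto
          then show False using u dj by auto
        qed
      qed
    qed
  qed
  show ?thesis unfolding is_tree_def using p1 p3 p4 p5 p6 by blast
qed




lemma sink_contra:
  assumes tr: "S_tree_over i Sv F V E \<alpha>" and tg: "is_F_tangle i Sv F Or"
  shows False
proof -
  have T: "is_tree V E" and ne: "E \<noteq> {}"
    and al: "\<And>u v. (u, v) \<in> E \<Longrightarrow> \<alpha> (u, v) \<in> Sv \<and> \<alpha> (v, u) = i (\<alpha> (u, v))"
    and st: "\<forall>t\<in>V. {\<alpha> (y, t) | y. (y, t) \<in> E} \<in> F"
    using tr unfolding S_tree_over_def is_S_tree_def by auto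
  have finV: "finite V" and EV: "E \<subseteq> V \<times> V" and sym: "\<And>u v. (u, v) \<in> E \<Longrightarrow> (v, u) \<in> E \<and> u \<noteq> v"
    and br: "\<And>u v. (u, v) \<in> E \<Longrightarrow> (u, v) \<notin> (E - {(u, v), (v, u)})\<^sup>*"
    using T unfolding is_tree_def by auto
  have ori: "\<And>x. x \<in> Sv \<Longrightarrow> x \<in> Or \<or> i x \<in> Or" and av: "\<forall>\<sigma>\<in>F. \<not> \<sigma> \<subseteq> Or"
    using tg unfolding is_F_tangle_def orientation_def avoids_def by auto
  have nosink: "\<forall>t\<in>V. \<exists>y. (y, t) \<in> E \<and> \<alpha> (y, t) \<notin> Or"
  proof (rule ccontr)
    assume "\<not> ?thesis"
    then obtain t where "t \<in> V" "\<forall>y. (y, t) \<in> E \<longrightarrow> \<alpha> (y, t) \<in> Or" by auto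
    hence "{\<alpha> (y, t) | y. (y, t) \<in> E} \<subseteq> Or" by auto
    then show False using st av \<open>t \<in> V\<close> by auto
  qed
  define nx where "nx t = (SOME y. (y, t) \<in> E \<and> \<alpha> (y, t) \<notin> Or)" for t
  have nx: "(nx t, t) \<in> E" "\<alpha> (nx t, t) \<notin> Or" if "t \<in> V" for t
    using someI_ex[OF nosink[rule_format, OF that]] unfolding nx_def by auto
  have nxV: "nx t \<in> V" if "t \<in> V" for t using nx[OF that] EV by auto
  have nxin: "\<alpha> (t, nx t) \<in> Or" if "t \<in> V" for t
    using nx[OF that] al[OF nx(1)[OF that]] ori by auto
  have nx2: "nx (nx t) \<noteq> t" if "t \<in> V" for t
    using nx(2)[OF nxV[OF that]] nxin[OF that] by auto
  have nx1: "nx t \<noteq> t" if "t \<in> V" for t using sym nx(1)[OF that] by auto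
  obtain t0 where t0: "t0 \<in> V" using ne EV by auto
  define sq where "sq k = (nx ^^ k) t0" for k
  have sqV: "sq k \<in> V" for k by (induction k) (auto simp: sq_def t0 nxV)
  have sqS: "sq (Suc k) = nx (sq k)" for k by (simp add: sq_def)
  have sqE: "(sq k, sq (Suc k)) \<in> E" for k using sym nx(1)[OF sqV] sqS by auto
  have "\<not> inj_on sq {..card V}"
  proof
    assume "inj_on sq {..card V}"
    hence "card (sq ` {..card V}) = Suc (card V)" by (simp add: card_image)
    moreover have "card (sq ` {..card V}) \<le> card V" using sqV by (intro card_mono[OF finV]) auto
    ultimately show False by simp
  qed
  then obtain a b where ab: "a \<noteq> b" "sq a = sq b" unfolding inj_on_def by auto
  define J where "J = {j. \<exists>a<j. sq a = sq j}"
  have "max a b \<in> J"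
  proof (cases "a < b")
    case True then show ?thesis using ab unfolding J_def by (auto simp: max_def)
  next
    case False then have "b < a" using ab by auto
    then show ?thesis using ab unfolding J_def by (auto simp: max_def intro!: exI[of _ b])
  qed
  define j where "j = (LEAST j. j \<in> J)"
  have jJ: "j \<in> J" using LeastI[of "\<lambda>j. j \<in> J"] \<open>max a b \<in> J\<close> j_def by auto
  then obtain i0 where i0: "i0 < j" "sq i0 = sq j" unfolding J_def by auto
  have dist: "sq a \<noteq> sq b" if "a < b" "b < j" for a b
  proof
    assume "sq a = sq b"
    hence "b \<in> J" using that unfolding J_def by auto
    then show False using not_less_Least[of b "\<lambda>j. j \<in> J"] that j_def by auto
  qed
  have "j \<noteq> Suc i0"
  proof
    assume "j = Suc i0"
    hence "nx (sq i0) = sq i0" using i0(2) sqS[of i0] by metis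
    then show False using nx1[OF sqV[of i0]] by blast
  qed
  moreover have "j \<noteq> Suc (Suc i0)"
  proof
    assume "j = Suc (Suc i0)"
    hence "nx (nx (sq i0)) = sq i0" using i0(2) sqS[of i0] sqS[of "Suc i0"] by metis
    then show False using nx2[OF sqV[of i0]] by blast
  qed
  ultimately have j3: "Suc (Suc i0) < j" using i0 by auto
  define u where "u = sq (Suc i0)"
  define v where "v = sq i0"
  define R where "R = E - {(u, v), (v, u)}"
  have uv: "(u, v) \<in> E" using sqE[of i0] sym u_def v_def by auto
  have path: "k + Suc i0 \<le> j \<Longrightarrow> (u, sq (k + Suc i0)) \<in> R\<^sup>*" for k
  proof (induction k)
    case 0 then show ?case by (simp add: u_def)
  next
    case (Suc k)
    let ?k = "k + Suc i0"
    have IH: "(u, sq ?k) \<in> R\<^sup>*" using Suc by auto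
    have e: "(sq ?k, sq (Suc ?k)) \<in> E" using sqE by auto
    have n1: "(sq ?k, sq (Suc ?k)) \<noteq> (u, v)"
    proof
      assume h: "(sq ?k, sq (Suc ?k)) = (u, v)"
      show False
      proof (cases k)
        case 0
        hence "sq (Suc (Suc i0)) = sq i0" using h u_def v_def by auto
        then show False using nx2[OF sqV[of i0]] sqS[of i0] sqS[of "Suc i0"] by metis
      next
        case (Suc k')
        then show False using h dist[of "Suc i0" ?k] Suc.prems u_def by auto
      qed
    qed
    have n2: "(sq ?k, sq (Suc ?k)) \<noteq> (v, u)"
      using dist[of i0 ?k] Suc.prems v_def by auto
    have "(sq ?k, sq (Suc ?k)) \<in> R" using e n1 n2 unfolding R_def by auto
    then show ?case using IH by (simp add: rtrancl_into_rtrancl)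
  qed
  have "(u, sq j) \<in> R\<^sup>*" using path[of "j - Suc i0"] i0 by auto
  hence "(u, v) \<in> R\<^sup>*" using i0 v_def by auto
  then show False using br[OF uv] unfolding R_def by auto
qed




definition stars :: "(nat \<times> nat) set \<Rightarrow> (nat \<times> nat \<Rightarrow> 'a) \<Rightarrow> nat \<Rightarrow> 'a set" where
  "stars E \<alpha> t = {\<alpha> (y, t) | y. (y, t) \<in> E}"

context SS begin

definition lab where "lab E \<alpha> \<longleftrightarrow> (\<forall>u v. (u, v) \<in> E \<longrightarrow> \<alpha> (u, v) \<in> Sv \<and> \<alpha> (v, u) = i (\<alpha> (u, v)))"

lemma attach:
  assumes T1: "is_tree V1 E1" "\<rho>1 \<in> V1" "lab E1 \<alpha>1"
    and T2: "is_tree V2 E2" "\<rho>2 \<in> V2" "lab E2 \<alpha>2" and wS: "w \<in> Sv"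
  shows "\<exists>V E \<alpha> \<rho>2'. is_tree V E \<and> \<rho>1 \<in> V \<and> \<rho>2' \<in> V \<and> \<rho>2' \<noteq> \<rho>1 \<and> lab E \<alpha> \<and> E \<noteq> {} \<and>
     stars E \<alpha> \<rho>1 = insert w (stars E1 \<alpha>1 \<rho>1) \<and> stars E \<alpha> \<rho>2' = insert (i w) (stars E2 \<alpha>2 \<rho>2) \<and>
     (\<forall>t\<in>V - {\<rho>1, \<rho>2'}. (t \<in> V1 - {\<rho>1} \<and> stars E \<alpha> t = stars E1 \<alpha>1 t) \<or>
        (\<exists>t2\<in>V2 - {\<rho>2}. stars E \<alpha> t = stars E2 \<alpha>2 t2))"
proof -
  have fin1: "finite V1" and EV1: "E1 \<subseteq> V1 \<times> V1" using T1 unfolding is_tree_def by auto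
  have EV2: "E2 \<subseteq> V2 \<times> V2" using T2 unfolding is_tree_def by auto
  define k where "k = Suc (Max V1)"
  define f where "f x = x + k" for x :: nat
  have lt: "x \<in> V1 \<Longrightarrow> x < k" for x using Max_ge[OF fin1] unfolding k_def by force
  have fnot: "f y \<notin> V1" for y using lt[of "f y"] unfolding f_def by auto
  have finv: "f y - k = y" for y unfolding f_def by auto
  have injf: "inj_on f V2" unfolding inj_on_def f_def by auto
  define V2' where "V2' = f ` V2"
  define E2' where "E2' = (\<lambda>(a, b). (f a, f b)) ` E2"
  define \<rho>2' where "\<rho>2' = f \<rho>2"
  define V where "V = V1 \<union> V2'"
  define E where "E = E1 \<union> E2' \<union> {(\<rho>1, \<rho>2'), (\<rho>2', \<rho>1)}"
  define \<alpha> where "\<alpha> = (\<lambda>(a, b). if a \<in> V1 \<and> b \<in> V1 then \<alpha>1 (a, b) else if a \<in> V1 then i w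
      else if b \<in> V1 then w else \<alpha>2 (a - k, b - k))"
  have dj: "V1 \<inter> V2' = {}" using fnot unfolding V2'_def by auto
  have T2': "is_tree V2' E2'" using rename_tree[OF T2(1) injf] unfolding V2'_def E2'_def .
  have r2V: "\<rho>2' \<in> V2'" using T2(2) unfolding \<rho>2'_def V2'_def by auto
  have tr: "is_tree V E" using join_tree[OF T1(1) T2' dj T1(2) r2V] unfolding V_def E_def .
  have r2n: "\<rho>2' \<notin> V1" using fnot unfolding \<rho>2'_def by auto
  have E2'mem: "(a, b) \<in> E2' \<longleftrightarrow> (\<exists>c d. (c, d) \<in> E2 \<and> a = f c \<and> b = f d)" for a b
    unfolding E2'_def by auto
  have lab1: "\<And>u v. (u, v) \<in> E1 \<Longrightarrow> \<alpha>1 (u, v) \<in> Sv \<and> \<alpha>1 (v, u) = i (\<alpha>1 (u, v))"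
    using T1(3) unfolding lab_def by auto
  have lab2: "\<And>u v. (u, v) \<in> E2 \<Longrightarrow> \<alpha>2 (u, v) \<in> Sv \<and> \<alpha>2 (v, u) = i (\<alpha>2 (u, v))"
    using T2(3) unfolding lab_def by auto
  have labE: "lab E \<alpha>"
    unfolding lab_def
  proof (intro allI impI)
    fix u v assume uv: "(u, v) \<in> E"
    consider "(u, v) \<in> E1" | "(u, v) \<in> E2'" | "(u, v) = (\<rho>1, \<rho>2')" | "(u, v) = (\<rho>2', \<rho>1)"
      using uv unfolding E_def by auto
    then show "\<alpha> (u, v) \<in> Sv \<and> \<alpha> (v, u) = i (\<alpha> (u, v))"
    proof cases
      case 1
      then have "u \<in> V1" "v \<in> V1" "(v, u) \<in> E1" using EV1 T1(1) unfolding is_tree_def by auto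
      then show ?thesis using lab1[OF 1] unfolding \<alpha>_def by auto
    next
      case 2
      then obtain c d where cd: "(c, d) \<in> E2" "u = f c" "v = f d" using E2'mem by auto
      then show ?thesis using lab2[OF cd(1)] fnot finv unfolding \<alpha>_def by auto
    next
      case 3 then show ?thesis using wS clo r2n T1(2) unfolding \<alpha>_def by auto
    next
      case 4 then show ?thesis using wS clo r2n T1(2) unfolding \<alpha>_def by auto
    qed
  qed
  have aE1: "\<alpha> (a, b) = \<alpha>1 (a, b)" if "(a, b) \<in> E1" for a b
    using that EV1 unfolding \<alpha>_def by auto
  have aE2: "\<alpha> (f c, f d) = \<alpha>2 (c, d)" for c d
    using fnot finv unfolding \<alpha>_def by simp
  have a12: "\<alpha> (\<rho>1, \<rho>2') = i w" using T1(2) r2n unfolding \<alpha>_def by simp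
  have a21: "\<alpha> (\<rho>2', \<rho>1) = w" using T1(2) r2n unfolding \<alpha>_def by simp
  have st1: "stars E \<alpha> t = stars E1 \<alpha>1 t \<union> (if t = \<rho>1 then {w} else {})" if t: "t \<in> V1" for t
  proof (rule set_eqI)
    fix z
    show "z \<in> stars E \<alpha> t \<longleftrightarrow> z \<in> stars E1 \<alpha>1 t \<union> (if t = \<rho>1 then {w} else {})"
    proof
      assume "z \<in> stars E \<alpha> t"
      then obtain y where y: "(y, t) \<in> E" "z = \<alpha> (y, t)" unfolding stars_def by auto
      show "z \<in> stars E1 \<alpha>1 t \<union> (if t = \<rho>1 then {w} else {})"
      proof (cases "(y, t) \<in> E1")
        case True then have "z = \<alpha>1 (y, t)" using y aE1 by simp
        then show ?thesis using True unfolding stars_def by blast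
      next
        case False
        hence "(y, t) \<in> E2' \<or> (y, t) = (\<rho>1, \<rho>2') \<or> (y, t) = (\<rho>2', \<rho>1)" using y unfolding E_def by blast
        moreover have "(y, t) \<notin> E2'" using t fnot E2'mem by metis
        moreover have "(y, t) \<noteq> (\<rho>1, \<rho>2')" using t r2n by blast
        ultimately have "y = \<rho>2'" "t = \<rho>1" by auto
        then show ?thesis using y a21 by simp
      qed
    next
      assume z: "z \<in> stars E1 \<alpha>1 t \<union> (if t = \<rho>1 then {w} else {})"
      show "z \<in> stars E \<alpha> t"
      proof (cases "z \<in> stars E1 \<alpha>1 t")
        case True
        then obtain y where y: "(y, t) \<in> E1" "z = \<alpha>1 (y, t)" unfolding stars_def by blast
        have "(y, t) \<in> E" using y unfolding E_def by blast
        then show ?thesis using y aE1 unfolding stars_def by force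
      next
        case False
        hence "t = \<rho>1" "z = w" using z by (auto split: if_splits)
        have "(\<rho>2', \<rho>1) \<in> E" unfolding E_def by blast
        then show ?thesis using a21 \<open>t = \<rho>1\<close> \<open>z = w\<close> unfolding stars_def by force
      qed
    qed
  qed
  have st2: "stars E \<alpha> (f t) = stars E2 \<alpha>2 t \<union> (if t = \<rho>2 then {i w} else {})" if t: "t \<in> V2" for t
  proof (rule set_eqI)
    fix z
    show "z \<in> stars E \<alpha> (f t) \<longleftrightarrow> z \<in> stars E2 \<alpha>2 t \<union> (if t = \<rho>2 then {i w} else {})"
    proof
      assume "z \<in> stars E \<alpha> (f t)"
      then obtain y where y: "(y, f t) \<in> E" "z = \<alpha> (y, f t)" unfolding stars_def by auto
      show "z \<in> stars E2 \<alpha>2 t \<union> (if t = \<rho>2 then {i w} else {})"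
      proof (cases "(y, f t) \<in> E2'")
        case True
        then obtain c d where cd: "(c, d) \<in> E2" "y = f c" "f t = f d" using E2'mem by blast
        hence "d = t" unfolding f_def by simp
        hence "z = \<alpha>2 (c, t)" using y(2) cd(2) aE2[of c t] by simp
        then show ?thesis using cd \<open>d = t\<close> unfolding stars_def by blast
      next
        case False
        hence "(y, f t) \<in> E1 \<or> (y, f t) = (\<rho>1, \<rho>2') \<or> (y, f t) = (\<rho>2', \<rho>1)" using y unfolding E_def by blast
        moreover have "(y, f t) \<notin> E1"
        proof
          assume "(y, f t) \<in> E1"
          then have "f t \<in> V1" using EV1 by blast
          then show False using fnot[of t] by blast
        qed
        moreover have "(y, f t) \<noteq> (\<rho>2', \<rho>1)" using fnot[of t] T1(2) by auto
        ultimately have "y = \<rho>1" "f t = \<rho>2'" by auto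
        hence "t = \<rho>2" unfolding f_def \<rho>2'_def by simp
        then show ?thesis using y a12 \<open>y = \<rho>1\<close> \<open>f t = \<rho>2'\<close> by simp
      qed
    next
      assume z: "z \<in> stars E2 \<alpha>2 t \<union> (if t = \<rho>2 then {i w} else {})"
      show "z \<in> stars E \<alpha> (f t)"
      proof (cases "z \<in> stars E2 \<alpha>2 t")
        case True
        then obtain y where y: "(y, t) \<in> E2" "z = \<alpha>2 (y, t)" unfolding stars_def by blast
        have "(f y, f t) \<in> E" using y E2'mem unfolding E_def by blast
        moreover have "z = \<alpha> (f y, f t)" using y(2) aE2[of y t] by simp
        ultimately show ?thesis unfolding stars_def by blast
      next
        case False
        hence "t = \<rho>2" "z = i w" using z by (auto split: if_splits)
        have "(\<rho>1, \<rho>2') \<in> E" unfolding E_def by blast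
        then show ?thesis using a12 \<open>t = \<rho>2\<close> \<open>z = i w\<close> unfolding stars_def \<rho>2'_def by force
      qed
    qed
  qed
  show ?thesis
  proof (intro exI conjI)
    show "is_tree V E" by (rule tr)
    show "\<rho>1 \<in> V" "\<rho>2' \<in> V" using T1(2) r2V unfolding V_def by auto
    show "\<rho>2' \<noteq> \<rho>1" using r2n T1(2) by auto
    show "lab E \<alpha>" by (rule labE)
    show "E \<noteq> {}" unfolding E_def by auto
    show "stars E \<alpha> \<rho>1 = insert w (stars E1 \<alpha>1 \<rho>1)" using st1[OF T1(2)] by auto
    show "stars E \<alpha> \<rho>2' = insert (i w) (stars E2 \<alpha>2 \<rho>2)" using st2[OF T2(2)] unfolding \<rho>2'_def by auto
    show "\<forall>t\<in>V - {\<rho>1, \<rho>2'}. (t \<in> V1 - {\<rho>1} \<and> stars E \<alpha> t = stars E1 \<alpha>1 t) \<or>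
        (\<exists>t2\<in>V2 - {\<rho>2}. stars E \<alpha> t = stars E2 \<alpha>2 t2)"
    proof
      fix t assume t: "t \<in> V - {\<rho>1, \<rho>2'}"
      show "(t \<in> V1 - {\<rho>1} \<and> stars E \<alpha> t = stars E1 \<alpha>1 t) \<or> (\<exists>t2\<in>V2 - {\<rho>2}. stars E \<alpha> t = stars E2 \<alpha>2 t2)"
      proof (cases "t \<in> V1")
        case True then show ?thesis using st1 t by auto
      next
        case False
        then obtain t2 where t2: "t2 \<in> V2" "t = f t2" using t unfolding V_def V2'_def by auto
        have "t2 \<noteq> \<rho>2" using t t2 unfolding \<rho>2'_def by auto
        then show ?thesis using st2[OF t2(1)] t2 by auto
      qed
    qed
  qed
qed

end



context SS begin

definition RT where "RT V E \<alpha> \<rho> W \<longleftrightarrow> is_tree V E \<and> \<rho> \<in> V \<and> lab E \<alpha> \<and> (\<forall>t\<in>V - {\<rho>}. stars E \<alpha> t \<in> F)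
   \<and> stars E \<alpha> \<rho> = W"

lemma RT_single: "RT {0} {} \<alpha> 0 {}"
  unfolding RT_def is_tree_def lab_def stars_def by auto

lemma branch:
  assumes "PL i F x"
  shows "\<exists>\<sigma>\<in>F. x \<in> \<sigma> \<and> (\<exists>V E \<alpha> \<rho>. RT V E \<alpha> \<rho> (\<sigma> - {x}))"
  using assms
proof (induction rule: PL.induct)
  case (PLI \<sigma> x)
  have sS: "\<sigma> \<subseteq> Sv" using FP PLI(1) by auto
  have finS: "finite (\<sigma> - {x})" using fin sS finite_subset by blast
  have "\<exists>V E \<alpha> \<rho>. RT V E \<alpha> \<rho> (\<sigma> - {x})"
  proof (rule finite_subset_induct[OF finS subset_refl])
    show "\<exists>V E \<alpha> \<rho>. RT V E \<alpha> \<rho> {}" using RT_single by blast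
  next
    fix w W assume w: "w \<in> \<sigma> - {x}" and IH: "\<exists>V E \<alpha> \<rho>. RT V E \<alpha> \<rho> W"
    obtain V1 E1 \<alpha>1 \<rho>1 where R1: "RT V1 E1 \<alpha>1 \<rho>1 W" using IH by blast
    obtain \<sigma>w V2 E2 \<alpha>2 \<rho>2 where sw: "\<sigma>w \<in> F" "i w \<in> \<sigma>w" and R2: "RT V2 E2 \<alpha>2 \<rho>2 (\<sigma>w - {i w})"
      using PLI(3) w by blast
    have wS: "w \<in> Sv" using w sS by auto
    obtain V E \<alpha> \<rho>2' where A: "is_tree V E" "\<rho>1 \<in> V" "\<rho>2' \<in> V" "\<rho>2' \<noteq> \<rho>1" "lab E \<alpha>" "E \<noteq> {}"
      "stars E \<alpha> \<rho>1 = insert w (stars E1 \<alpha>1 \<rho>1)" "stars E \<alpha> \<rho>2' = insert (i w) (stars E2 \<alpha>2 \<rho>2)"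
      "\<forall>t\<in>V - {\<rho>1, \<rho>2'}. (t \<in> V1 - {\<rho>1} \<and> stars E \<alpha> t = stars E1 \<alpha>1 t) \<or>
        (\<exists>t2\<in>V2 - {\<rho>2}. stars E \<alpha> t = stars E2 \<alpha>2 t2)"
    proof -
      have "is_tree V1 E1" "\<rho>1 \<in> V1" "lab E1 \<alpha>1" "is_tree V2 E2" "\<rho>2 \<in> V2" "lab E2 \<alpha>2"
        using R1 R2 unfolding RT_def by auto
      from attach[OF this wS] show ?thesis using that by metis
    qed
    have "RT V E \<alpha> \<rho>1 (insert w W)"
      unfolding RT_def
    proof (intro conjI ballI)
      show "is_tree V E" "\<rho>1 \<in> V" "lab E \<alpha>" using A by auto
      show "stars E \<alpha> \<rho>1 = insert w W" using A(7) R1 unfolding RT_def by auto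
      fix t assume t: "t \<in> V - {\<rho>1}"
      show "stars E \<alpha> t \<in> F"
      proof (cases "t = \<rho>2'")
        case True
        then have "stars E \<alpha> t = \<sigma>w" using A(8) R2 sw(2) unfolding RT_def by auto
        then show ?thesis using sw by auto
      next
        case False
        then have "(t \<in> V1 - {\<rho>1} \<and> stars E \<alpha> t = stars E1 \<alpha>1 t) \<or>
          (\<exists>t2\<in>V2 - {\<rho>2}. stars E \<alpha> t = stars E2 \<alpha>2 t2)" using A(9) t by auto
        then show ?thesis using R1 R2 unfolding RT_def by auto
      qed
    qed
    then show "\<exists>V E \<alpha> \<rho>. RT V E \<alpha> \<rho> (insert w W)" by blast
  qed
  then show ?case using PLI(1,2) by blast
qed

lemma Tr_tree:
  assumes "Tr i F"
  shows "\<exists>V E \<alpha>. S_tree_over i Sv F V E \<alpha>"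
proof -
  obtain x where x: "PL i F x" "PL i F (i x)" using assms unfolding Tr_def by auto
  obtain \<sigma>1 V1 E1 \<alpha>1 \<rho>1 where s1: "\<sigma>1 \<in> F" "x \<in> \<sigma>1" and R1: "RT V1 E1 \<alpha>1 \<rho>1 (\<sigma>1 - {x})"
    using branch[OF x(1)] by blast
  obtain \<sigma>2 V2 E2 \<alpha>2 \<rho>2 where s2: "\<sigma>2 \<in> F" "i x \<in> \<sigma>2" and R2: "RT V2 E2 \<alpha>2 \<rho>2 (\<sigma>2 - {i x})"
    using branch[OF x(2)] by blast
  have xS: "x \<in> Sv" using s1 FP by auto
  obtain V E \<alpha> \<rho>2' where A: "is_tree V E" "\<rho>1 \<in> V" "\<rho>2' \<in> V" "\<rho>2' \<noteq> \<rho>1" "lab E \<alpha>" "E \<noteq> {}"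
      "stars E \<alpha> \<rho>1 = insert x (stars E1 \<alpha>1 \<rho>1)" "stars E \<alpha> \<rho>2' = insert (i x) (stars E2 \<alpha>2 \<rho>2)"
      "\<forall>t\<in>V - {\<rho>1, \<rho>2'}. (t \<in> V1 - {\<rho>1} \<and> stars E \<alpha> t = stars E1 \<alpha>1 t) \<or>
        (\<exists>t2\<in>V2 - {\<rho>2}. stars E \<alpha> t = stars E2 \<alpha>2 t2)"
  proof -
    have "is_tree V1 E1" "\<rho>1 \<in> V1" "lab E1 \<alpha>1" "is_tree V2 E2" "\<rho>2 \<in> V2" "lab E2 \<alpha>2"
      using R1 R2 unfolding RT_def by auto
    from attach[OF this xS] show ?thesis using that by metis
  qed
  have st: "stars E \<alpha> t \<in> F" if t: "t \<in> V" for t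
  proof -
    consider "t = \<rho>1" | "t = \<rho>2'" | "t \<in> V - {\<rho>1, \<rho>2'}" using t by auto
    then show ?thesis
    proof cases
      case 1 then show ?thesis using A(7) R1 s1 unfolding RT_def by (auto simp: insert_absorb)
    next
      case 2 then show ?thesis using A(8) R2 s2 unfolding RT_def by (auto simp: insert_absorb)
    next
      case 3
      then have "(t \<in> V1 - {\<rho>1} \<and> stars E \<alpha> t = stars E1 \<alpha>1 t) \<or>
        (\<exists>t2\<in>V2 - {\<rho>2}. stars E \<alpha> t = stars E2 \<alpha>2 t2)" using A(9) by blast
      then show ?thesis using R1 R2 unfolding RT_def by auto
    qed
  qed
  have "S_tree_over i Sv F V E \<alpha>"
    unfolding S_tree_over_def is_S_tree_def
    using A(1,5,6) st unfolding lab_def stars_def by auto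
  then show ?thesis by blast
qed

end

theorem theorem4p4:
  fixes invol :: "'a::lattice \<Rightarrow> 'a"
    and Sv :: "'a set"
    and F :: "'a set set"
  assumes "universe_invol invol"
    and "sep_system invol Sv"
    and "finite Sv"
    and "F \<subseteq> Pow Sv"
    and "\<forall>\<sigma>\<in>F. is_star invol Sv \<sigma>"
    and "standard invol Sv F"
    and "F_separable invol Sv F"
  shows "((\<exists>V E \<alpha>. S_tree_over invol Sv F V E \<alpha>) \<or> (\<exists>Or. is_F_tangle invol Sv F Or)) \<and>
         \<not> ((\<exists>V E \<alpha>. S_tree_over invol Sv F V E \<alpha>) \<and> (\<exists>Or. is_F_tangle invol Sv F Or))"
proof -
  interpret SS invol Sv F
    using assms by (unfold_locales) auto
  have nb: "\<not> ((\<exists>V E \<alpha>. S_tree_over invol Sv F V E \<alpha>) \<and> (\<exists>Or. is_F_tangle invol Sv F Or))"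
    using sink_contra by blast
  have "(\<exists>V E \<alpha>. S_tree_over invol Sv F V E \<alpha>) \<or> (\<exists>Or. is_F_tangle invol Sv F Or)"
  proof (cases "Tr invol F")
    case True
    then show ?thesis using Tr_tree by blast
  next
    case False
    have "dc {}" unfolding dc_def by auto
    moreover have "GP {} = F" unfolding GP_def by auto
    ultimately show ?thesis using main False by auto
  qed
  then show ?thesis using nb by blast
qed

end
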